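(* Let $S\in\mathcal S(n)$, let $k\le n$, let $L\ge n$ with $\tau=L/\sqrt{nk}$ and suppose $M=2L/\tau+k$ is an integer. Let $P_0$ be a $\tau$-post and suppose the $k\times M$ $\tau$-fence-tree with root $P_0$ exists in $S$, with nodes $P_i^m=(X_i^m,Y_i^m)$, and put $\Delta x=X_k^M-X_1^1$. Then (a) the path in the tree from the root $P_1^1$ to $P_k^M$ (the concatenation of the tree edges along it) has length at most $4L+3\tau\Delta x$; and (b) the total length of all edges of the tree is at most $k(3L+3\tau\Delta x)$.
   Context: Setting: $\mathcal S(n)$ is the class of scenes in the plane consisting of finitely many non-overlapping axis-parallel rectangular obstacles of width and height at least $1$, with integral corner $x$-coordinates, start $s=(0,0)$ and target the vertical line ("wall") $x=n$. Up/down/right mean the $+y$/$-y$/$+x$ directions. A $\tau$-post is a vertical segment of height $2\tau$ contained in the left edge of an obstacle; it is identified with its center point. A $\tau$-path from a point $(x,y_0)$ is the path obtained by moving right along the line $y=y_0$: when an obstacle is hit whose nearest corner is at distance less than $\tau$, the path goes around that corner to the point on the opposite (right) side of the obstacle with $y$-coordinate $y_0$ and continues right; when an obstacle is hit whose nearest corner is at distance at least $\tau$, the path stops, and the $\tau$-post centered at the hit point is the end of the path; if the wall is reached the path stops there. For a $\tau$-post $P$, its up-child (resp. down-child) is the $\tau$-post at the end of the $\tau$-path starting from the top (resp. bottom) endpoint of $P$ (undefined if that $\tau$-path reaches the wall); the up-edge (resp. down-edge) from $P$ to that child is the vertical segment of length $\tau$ from the center of $P$ to its top (resp. bottom) endpoint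 followed by that $\tau$-path. The $k\times M$ $\tau$-fence-tree with root $P_0$ is the binary tree with nodes $P_i^m$, $1\le i\le k$, $1\le m\le M$, defined by: $P_1^1=P_0$; $P_1^m$ is the up-child of $P_1^{m-1}$ for $m\ge2$; $P_i^1$ is the down-child of $P_{i-1}^1$ for $i\ge2$; and for $i,m\ge2$, $P_i^m$ is the down-child of $P_{i-1}^m$ if $X_{i-1}^m> X_i^{m-1}$, and the up-child of $P_i^{m-1}$ otherwise. Its edges are the corresponding up- and down-edges from each node to its children. The tree is said to exist in $S$ if all these children are defined (no $\tau$-path used reaches the wall). *)

theory Defs
  imports Complex_Main
begin

record rect =
  rx1 :: real
  rx2 :: real
  ry1 :: real
  ry2 :: real

text \<open>The class S(n): finitely many non-overlapping (disjoint interiors) rectangles of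
  width and height at least 1 with integral x-coordinates of corners; the start (0,0)
  is not in the interior of an obstacle; the target is the wall x = n.\<close>
definition scene :: "nat \<Rightarrow> rect set \<Rightarrow> bool" where
  "scene n S \<longleftrightarrow> finite S \<and>
     (\<forall>R\<in>S. rx1 R + 1 \<le> rx2 R \<and> ry1 R + 1 \<le> ry2 R \<and> rx1 R \<in> \<int> \<and> rx2 R \<in> \<int>) \<and>
     (\<forall>R\<in>S. \<forall>R'\<in>S. R \<noteq> R' \<longrightarrow>
        \<not> (rx1 R < rx2 R' \<and> rx1 R' < rx2 R \<and> ry1 R < ry2 R' \<and> ry1 R' < ry2 R)) \<and>
     (\<forall>R\<in>S. \<not> (rx1 R < 0 \<and> 0 < rx2 R \<and> ry1 R < 0 \<and> 0 < ry2 R))"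

definition hits :: "rect set \<Rightarrow> real \<Rightarrow> real \<Rightarrow> rect set" where
  "hits S x y = {R\<in>S. x \<le> rx1 R \<and> ry1 R \<le> y \<and> y \<le> ry2 R}"

text \<open>The first obstacle hit (one with minimal left x-coordinate; ties, which can only
  occur at a shared corner, are resolved by an unspecified choice).\<close>
definition first_hit :: "rect set \<Rightarrow> real \<Rightarrow> real \<Rightarrow> rect" where
  "first_hit S x y = (SOME R. R \<in> hits S x y \<and> (\<forall>R'\<in>hits S x y. rx1 R \<le> rx1 R'))"

text \<open>Result: (Some X, len) if the path ends at the
  tau-post centred at (X, y), (None, len) if it reaches the wall x = n; len is the
  length of the path. Going around a corner at distance d of an obstacle of width w
  costs 2d + w.\<close>
fun tpath :: "rect set \<Rightarrow> nat \<Rightarrow> real \<Rightarrow> nat \<Rightarrow> real \<Rightarrow> real \<Rightarrow> real option \<times> real" where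
  "tpath S n tau 0 x y = (None, real n - x)"
| "tpath S n tau (Suc f) x y =
     (if hits S x y = {} then (None, real n - x)
      else (let R = first_hit S x y; d = min (y - ry1 R) (ry2 R - y) in
        if real n \<le> rx1 R then (None, real n - x)
        else if d < tau then
          (case tpath S n tau f (rx2 R) y of (r, l) \<Rightarrow>
             (r, (rx1 R - x) + 2 * d + (rx2 R - rx1 R) + l))
        else (Some (rx1 R), rx1 R - x)))"

text \<open>Enough fuel: every detour passes a different obstacle.\<close>
definition tau_path :: "rect set \<Rightarrow> nat \<Rightarrow> real \<Rightarrow> real \<times> real \<Rightarrow> real option \<times> real" where
  "tau_path S n tau p = tpath S n tau (Suc (card S)) (fst p) (snd p)"

definition is_post :: "rect set \<Rightarrow> real \<Rightarrow> real \<times> real \<Rightarrow> bool" where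
  "is_post S tau P \<longleftrightarrow> (\<exists>R\<in>S. fst P = rx1 R \<and> ry1 R \<le> snd P - tau \<and> snd P + tau \<le> ry2 R)"

text \<open>Up-/down-child (the centre of the post); meaningful only when defined.\<close>
definition up_child :: "rect set \<Rightarrow> nat \<Rightarrow> real \<Rightarrow> real \<times> real \<Rightarrow> real \<times> real" where
  "up_child S n tau P = (the (fst (tau_path S n tau (fst P, snd P + tau))), snd P + tau)"

definition down_child :: "rect set \<Rightarrow> nat \<Rightarrow> real \<Rightarrow> real \<times> real \<Rightarrow> real \<times> real" where
  "down_child S n tau P = (the (fst (tau_path S n tau (fst P, snd P - tau))), snd P - tau)"

section \<open>Fence tree (0-based indices: ftree i m = P_{i+1}^{m+1})\<close>

fun ftree :: "rect set \<Rightarrow> nat \<Rightarrow> real \<Rightarrow> real \<times> real \<Rightarrow> nat \<Rightarrow> nat \<Rightarrow> real \<times> real" where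
  "ftree S n tau P0 0 0 = P0"
| "ftree S n tau P0 0 (Suc m) = up_child S n tau (ftree S n tau P0 0 m)"
| "ftree S n tau P0 (Suc i) 0 = down_child S n tau (ftree S n tau P0 i 0)"
| "ftree S n tau P0 (Suc i) (Suc m) =
     (if fst (ftree S n tau P0 i (Suc m)) > fst (ftree S n tau P0 (Suc i) m)
      then down_child S n tau (ftree S n tau P0 i (Suc m))
      else up_child S n tau (ftree S n tau P0 (Suc i) m))"

text \<open>For a non-root node (i,m): its parent and whether the edge is an up-edge.\<close>
fun parent :: "rect set \<Rightarrow> nat \<Rightarrow> real \<Rightarrow> real \<times> real \<Rightarrow> nat \<Rightarrow> nat \<Rightarrow> (nat \<times> nat) \<times> bool" where
  "parent S n tau P0 0 0 = ((0, 0), True)"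
| "parent S n tau P0 0 (Suc m) = ((0, m), True)"
| "parent S n tau P0 (Suc i) 0 = ((i, 0), False)"
| "parent S n tau P0 (Suc i) (Suc m) =
     (if fst (ftree S n tau P0 i (Suc m)) > fst (ftree S n tau P0 (Suc i) m)
      then ((i, Suc m), False) else ((Suc i, m), True))"

definition edge_path :: "rect set \<Rightarrow> nat \<Rightarrow> real \<Rightarrow> real \<times> real \<Rightarrow> nat \<Rightarrow> nat \<Rightarrow> real option \<times> real" where
  "edge_path S n tau P0 i m =
     (let ((pi, pm), up) = parent S n tau P0 i m; Q = ftree S n tau P0 pi pm in
      tau_path S n tau (fst Q, if up then snd Q + tau else snd Q - tau))"

text \<open>Length of the edge into (i,m): vertical segment of length tau plus the tau-path.\<close>
definition edge_len :: "rect set \<Rightarrow> nat \<Rightarrow> real \<Rightarrow> real \<times> real \<Rightarrow> nat \<Rightarrow> nat \<Rightarrow> real" where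
  "edge_len S n tau P0 i m = tau + snd (edge_path S n tau P0 i m)"

definition fence_tree_exists :: "rect set \<Rightarrow> nat \<Rightarrow> real \<Rightarrow> real \<times> real \<Rightarrow> nat \<Rightarrow> nat \<Rightarrow> bool" where
  "fence_tree_exists S n tau P0 k M \<longleftrightarrow>
     (\<forall>i<k. \<forall>m<M. (i, m) \<noteq> (0, 0) \<longrightarrow> fst (edge_path S n tau P0 i m) \<noteq> None)"

fun root_path_len :: "rect set \<Rightarrow> nat \<Rightarrow> real \<Rightarrow> real \<times> real \<Rightarrow> nat \<Rightarrow> nat \<Rightarrow> real" where
  "root_path_len S n tau P0 0 0 = 0"
| "root_path_len S n tau P0 0 (Suc m) = edge_len S n tau P0 0 (Suc m) + root_path_len S n tau P0 0 m"
| "root_path_len S n tau P0 (Suc i) 0 = edge_len S n tau P0 (Suc i) 0 + root_path_len S n tau P0 i 0"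
| "root_path_len S n tau P0 (Suc i) (Suc m) = edge_len S n tau P0 (Suc i) (Suc m) +
     (if fst (ftree S n tau P0 i (Suc m)) > fst (ftree S n tau P0 (Suc i) m)
      then root_path_len S n tau P0 i (Suc m) else root_path_len S n tau P0 (Suc i) m)"

definition total_edge_len :: "rect set \<Rightarrow> nat \<Rightarrow> real \<Rightarrow> real \<times> real \<Rightarrow> nat \<Rightarrow> nat \<Rightarrow> real" where
  "total_edge_len S n tau P0 k M =
     (\<Sum>im \<in> ({..<k} \<times> {..<M}) - {(0, 0)}. edge_len S n tau P0 (fst im) (snd im))"

end

theory Submission
  imports Defs
begin

lemma first_hit_in:
  assumes "finite S" "hits S x y \<noteq> {}"
  shows "first_hit S x y \<in> hits S x y"
proof -
  let ?H = "hits S x y"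
  have fH: "finite ?H" using assms(1) unfolding hits_def by simp
  have "Min (rx1 ` ?H) \<in> rx1 ` ?H" using fH assms(2) by (intro Min_in) auto
  then obtain R where R: "R \<in> ?H" "rx1 R = Min (rx1 ` ?H)" by auto
  have "\<forall>R'\<in>?H. rx1 R \<le> rx1 R'" using R fH by (auto intro: Min_le)
  with R have "\<exists>R. R \<in> ?H \<and> (\<forall>R'\<in>?H. rx1 R \<le> rx1 R')" by blast
  from someI_ex[OF this] show ?thesis unfolding first_hit_def by blast
qed

lemma tpath_bound:
  assumes W: "\<forall>R\<in>S. rx1 R + 1 \<le> rx2 R" and fS: "finite S" and t: "0 \<le> tau"
  shows "tpath S n tau f x y = (Some X, l) \<Longrightarrow> x \<le> X \<and> l \<le> (1 + 2 * tau) * (X - x)"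
proof (induction f arbitrary: x X l)
  case 0
  then show ?case by simp
next
  case (Suc f)
  have ne: "hits S x y \<noteq> {}" using Suc.prems by (auto split: if_splits)
  define R where "R = first_hit S x y"
  define d where "d = min (y - ry1 R) (ry2 R - y)"
  have RH: "R \<in> hits S x y" using first_hit_in[OF fS ne] R_def by simp
  hence R: "R \<in> S" "x \<le> rx1 R" "ry1 R \<le> y" "y \<le> ry2 R" unfolding hits_def by auto
  have d0: "0 \<le> d" using R d_def by simp
  have w: "rx1 R + 1 \<le> rx2 R" using W R by auto
  have nn: "\<not> real n \<le> rx1 R" using Suc.prems ne by (auto simp: Let_def R_def split: if_splits)
  show ?case
  proof (cases "d < tau")
    case True
    obtain r l' where tp: "tpath S n tau f (rx2 R) y = (r, l')" by (cases "tpath S n tau f (rx2 R) y")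
    have eq: "(r, (rx1 R - x) + 2 * d + (rx2 R - rx1 R) + l') = (Some X, l)"
      using Suc.prems ne nn True tp by (simp add: Let_def R_def[symmetric] d_def[symmetric])
    hence r: "r = Some X" and l: "l = (rx1 R - x) + 2 * d + (rx2 R - rx1 R) + l'" by auto
    from Suc.IH[of "rx2 R" X l'] tp r have IH: "rx2 R \<le> X" "l' \<le> (1 + 2 * tau) * (X - rx2 R)" by auto
    have "2 * d \<le> 2 * tau * (rx2 R - rx1 R)"
    proof -
      have "tau * 1 \<le> tau * (rx2 R - rx1 R)" using w t by (intro mult_left_mono) auto
      thus ?thesis using True by linarith
    qed
    hence "l \<le> (rx1 R - x) + (1 + 2 * tau) * (rx2 R - rx1 R) + (1 + 2 * tau) * (X - rx2 R)"
      using l IH by (simp add: algebra_simps)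
    also have "\<dots> \<le> (1 + 2 * tau) * (rx1 R - x) + (1 + 2 * tau) * (rx2 R - rx1 R) + (1 + 2 * tau) * (X - rx2 R)"
      using R t mult_left_mono[OF R(2) t] by (simp add: algebra_simps)
    also have "\<dots> = (1 + 2 * tau) * (X - x)" by (simp add: algebra_simps)
    finally show ?thesis using IH R w by simp
  next
    case False
    have "(Some (rx1 R), rx1 R - x) = (Some X, l)"
      using Suc.prems ne nn False by (simp add: Let_def R_def[symmetric] d_def[symmetric])
    hence "X = rx1 R" "l = rx1 R - x" by auto
    thus ?thesis using R t mult_left_mono[OF R(2) t] by (simp add: algebra_simps)
  qed
qed

lemma tau_path_bound:
  assumes "\<forall>R\<in>S. rx1 R + 1 \<le> rx2 R" "finite S" "0 \<le> tau"
    and "fst (tau_path S n tau (a, b)) \<noteq> None"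
  shows "a \<le> the (fst (tau_path S n tau (a, b)))
    \<and> snd (tau_path S n tau (a, b)) \<le> (1 + 2 * tau) * (the (fst (tau_path S n tau (a, b))) - a)"
proof -
  obtain X l where "tau_path S n tau (a, b) = (Some X, l)"
    using assms(4) by (cases "tau_path S n tau (a, b)") auto
  moreover have "tpath S n tau (Suc (card S)) a b = (Some X, l)"
    using calculation unfolding tau_path_def by simp
  ultimately show ?thesis using tpath_bound[OF assms(1-3), of n "Suc (card S)" a b X l] by simp
qed

context
  fixes S :: "rect set" and n :: nat and tau :: real and P0 :: "real \<times> real" and k M :: nat
  assumes W: "\<forall>R\<in>S. rx1 R + 1 \<le> rx2 R" and fS: "finite S" and t: "0 \<le> tau"
    and ex: "fence_tree_exists S n tau P0 k M"
begin

abbreviation "XX i m \<equiv> fst (ftree S n tau P0 i m)"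
abbreviation "EL i m \<equiv> edge_len S n tau P0 i m"

lemma F1:
  assumes "0 < k" "Suc m < M"
  shows "XX 0 m \<le> XX 0 (Suc m) \<and> EL 0 (Suc m) \<le> tau + (1 + 2 * tau) * (XX 0 (Suc m) - XX 0 m)"
proof -
  let ?Q = "ftree S n tau P0 0 m"
  have e: "edge_path S n tau P0 0 (Suc m) = tau_path S n tau (fst ?Q, snd ?Q + tau)"
    by (simp add: edge_path_def Let_def)
  have "fst (edge_path S n tau P0 0 (Suc m)) \<noteq> None" using ex assms unfolding fence_tree_exists_def by auto
  from tau_path_bound[OF W fS t this[unfolded e]] show ?thesis
    by (simp add: edge_len_def e up_child_def)
qed

lemma F2:
  assumes "Suc i < k" "0 < M"
  shows "XX i 0 \<le> XX (Suc i) 0 \<and> EL (Suc i) 0 \<le> tau + (1 + 2 * tau) * (XX (Suc i) 0 - XX i 0)"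
proof -
  let ?Q = "ftree S n tau P0 i 0"
  have e: "edge_path S n tau P0 (Suc i) 0 = tau_path S n tau (fst ?Q, snd ?Q - tau)"
    by (simp add: edge_path_def Let_def)
  have "fst (edge_path S n tau P0 (Suc i) 0) \<noteq> None" using ex assms unfolding fence_tree_exists_def by auto
  from tau_path_bound[OF W fS t this[unfolded e]] show ?thesis
    by (simp add: edge_len_def e down_child_def)
qed

lemma F3:
  assumes "Suc i < k" "Suc m < M"
  shows "max (XX i (Suc m)) (XX (Suc i) m) \<le> XX (Suc i) (Suc m) \<and>
    EL (Suc i) (Suc m) \<le> tau + (1 + 2 * tau) * (XX (Suc i) (Suc m) - max (XX i (Suc m)) (XX (Suc i) m))"
proof -
  have nn: "fst (edge_path S n tau P0 (Suc i) (Suc m)) \<noteq> None" using ex assms unfolding fence_tree_exists_def by auto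
  show ?thesis
  proof (cases "XX i (Suc m) > XX (Suc i) m")
    case True
    let ?Q = "ftree S n tau P0 i (Suc m)"
    have e: "edge_path S n tau P0 (Suc i) (Suc m) = tau_path S n tau (fst ?Q, snd ?Q - tau)"
      using True by (simp add: edge_path_def Let_def)
    from tau_path_bound[OF W fS t nn[unfolded e]] True show ?thesis
      by (simp add: edge_len_def e down_child_def)
  next
    case False
    let ?Q = "ftree S n tau P0 (Suc i) m"
    have e: "edge_path S n tau P0 (Suc i) (Suc m) = tau_path S n tau (fst ?Q, snd ?Q + tau)"
      using False by (simp add: edge_path_def Let_def)
    from tau_path_bound[OF W fS t nn[unfolded e]] False show ?thesis
      by (simp add: edge_len_def e up_child_def max_def)
  qed
qed

lemma mono_m: "i < k \<Longrightarrow> Suc m < M \<Longrightarrow> XX i m \<le> XX i (Suc m)"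
  by (cases i) (use F1 F3 in fastforce)+

lemma mono_i: "Suc i < k \<Longrightarrow> m < M \<Longrightarrow> XX i m \<le> XX (Suc i) m"
  by (cases m) (use F2 F3 in fastforce)+

lemma mono_m': "i < k \<Longrightarrow> m' < M \<Longrightarrow> m \<le> m' \<Longrightarrow> XX i m \<le> XX i m'"
proof (induction m' arbitrary: m)
  case 0 then show ?case by simp
next
  case (Suc m')
  show ?case
  proof (cases "m = Suc m'")
    case False
    then have "XX i m \<le> XX i m'" using Suc by simp
    then show ?thesis using mono_m[of i m'] Suc.prems by simp
  qed simp
qed

lemma mono_i': "i' < k \<Longrightarrow> m < M \<Longrightarrow> i \<le> i' \<Longrightarrow> XX i m \<le> XX i' m"
proof (induction i' arbitrary: i)
  case 0 then show ?case by simp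
next
  case (Suc i')
  show ?case
  proof (cases "i = Suc i'")
    case False
    then have "XX i m \<le> XX i' m" using Suc by simp
    then show ?thesis using mono_i[of i' m] Suc.prems by simp
  qed simp
qed

lemma mono_all: "i \<le> i' \<Longrightarrow> m \<le> m' \<Longrightarrow> i' < k \<Longrightarrow> m' < M \<Longrightarrow> XX i m \<le> XX i' m'"
  using mono_i'[of i' m i] mono_m'[of i' m' m] by simp

lemma root_bound:
  "i < k \<Longrightarrow> m < M \<Longrightarrow> root_path_len S n tau P0 i m \<le> real (i + m) * tau + (1 + 2 * tau) * (XX i m - XX 0 0)"
proof (induction "i + m" arbitrary: i m rule: less_induct)
  case less
  show ?case
  proof (cases i)
    case 0
    show ?thesis
    proof (cases m)
      case (Suc m')
      have ih: "root_path_len S n tau P0 0 m' \<le> real (0 + m') * tau + (1 + 2 * tau) * (XX 0 m' - XX 0 0)"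
        using less.hyps[of 0 m'] less.prems 0 Suc by simp
      have f: "EL 0 m \<le> tau + (1 + 2 * tau) * (XX 0 m - XX 0 m')" using F1[of m'] less.prems Suc 0 by simp
      show ?thesis using ih f 0 Suc by (simp add: algebra_simps)
    qed (simp add: 0)
  next
    case (Suc i')
    show ?thesis
    proof (cases m)
      case 0
      have ih: "root_path_len S n tau P0 i' 0 \<le> real (i' + 0) * tau + (1 + 2 * tau) * (XX i' 0 - XX 0 0)"
        using less.hyps[of i' 0] less.prems 0 Suc by simp
      have f: "EL i 0 \<le> tau + (1 + 2 * tau) * (XX i 0 - XX i' 0)" using F2[of i'] less.prems Suc 0 by simp
      show ?thesis using ih f 0 Suc by (simp add: algebra_simps)
    next
      case (Suc m')
      note i = \<open>i = Suc i'\<close>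
      have f: "EL i m \<le> tau + (1 + 2 * tau) * (XX i m - max (XX i' m) (XX i m'))"
        using F3[of i' m'] less.prems Suc i by simp
      show ?thesis
      proof (cases "XX i' m > XX i m'")
        case True
        have ih: "root_path_len S n tau P0 i' m \<le> real (i' + m) * tau + (1 + 2 * tau) * (XX i' m - XX 0 0)"
          using less.hyps[of i' m] less.prems Suc i by simp
        have "root_path_len S n tau P0 i m = EL i m + root_path_len S n tau P0 i' m"
          using True Suc i by simp
        then show ?thesis using ih f True i by (simp add: algebra_simps max_def)
      next
        case False
        have ih: "root_path_len S n tau P0 i m' \<le> real (i + m') * tau + (1 + 2 * tau) * (XX i m' - XX 0 0)"
          using less.hyps[of i m'] less.prems Suc i by simp
        have "root_path_len S n tau P0 i m = EL i m + root_path_len S n tau P0 i m'"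
          using False Suc i by simp
        then show ?thesis using ih f False i Suc by (simp add: algebra_simps max_def)
      qed
    qed
  qed
qed

definition "hh i m = (if m = 0 then XX i 0 - XX (i - 1) 0 else XX i m - XX i (m - 1))"

lemma edge_h:
  assumes "i < k" "m < M" "(i, m) \<noteq> (0, 0)"
  shows "EL i m \<le> tau + (1 + 2 * tau) * hh i m"
proof (cases i)
  case 0
  then obtain m' where m: "m = Suc m'" using assms by (cases m) auto
  then show ?thesis using F1[of m'] assms 0 by (simp add: hh_def)
next
  case (Suc i')
  show ?thesis
  proof (cases m)
    case 0
    then show ?thesis using F2[of i'] assms Suc by (simp add: hh_def)
  next
    case (Suc m')
    have c: "0 \<le> 1 + 2 * tau" using t by simp
    have "XX i m - max (XX i' m) (XX i m') \<le> hh i m" using Suc by (simp add: hh_def)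
    from mult_left_mono[OF this c] F3[of i' m'] assms Suc \<open>i = Suc i'\<close> show ?thesis by simp
  qed
qed

lemma row_sum: "(\<Sum>m<Suc N. hh i m) = XX i N - XX (i - 1) 0"
  by (induction N) (simp_all add: hh_def)

lemma total_bound:
  assumes "0 < k" "0 < M"
  shows "total_edge_len S n tau P0 k M \<le> real (k * M - 1) * tau
     + (1 + 2 * tau) * (real k * (XX (k - 1) (M - 1) - XX 0 0))"
proof -
  let ?A = "{..<k} \<times> {..<M}"
  have c: "0 \<le> 1 + 2 * tau" using t by simp
  have fin: "finite (?A - {(0, 0)})" by simp
  have in0: "(0, 0) \<in> ?A" using assms by simp
  have cardA: "card (?A - {(0, 0)}) = k * M - 1" using in0 by (simp add: card_cartesian_product)
  have "total_edge_len S n tau P0 k M \<le> (\<Sum>im\<in>?A - {(0, 0)}. tau + (1 + 2 * tau) * hh (fst im) (snd im))"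
    unfolding total_edge_len_def
  proof (rule sum_mono)
    fix im assume "im \<in> ?A - {(0, 0)}"
    then show "EL (fst im) (snd im) \<le> tau + (1 + 2 * tau) * hh (fst im) (snd im)"
      using edge_h[of "fst im" "snd im"] by (cases im) auto
  qed
  also have "\<dots> = real (k * M - 1) * tau + (1 + 2 * tau) * (\<Sum>im\<in>?A - {(0, 0)}. hh (fst im) (snd im))"
    by (simp add: sum.distrib sum_distrib_left cardA)
  also have "(\<Sum>im\<in>?A - {(0, 0)}. hh (fst im) (snd im)) = (\<Sum>im\<in>?A. hh (fst im) (snd im))"
    using sum_diff1[of ?A "\<lambda>im. hh (fst im) (snd im)" "(0,0)"] in0 by (simp add: hh_def)
  also have "\<dots> = (\<Sum>i<k. \<Sum>m<M. hh i m)"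
    by (simp add: sum.cartesian_product case_prod_beta)
  also have "\<dots> \<le> (\<Sum>i<k. XX (k - 1) (M - 1) - XX 0 0)"
  proof (rule sum_mono)
    fix i assume i: "i \<in> {..<k}"
    have "M = Suc (M - 1)" using assms by simp
    have "(\<Sum>m<Suc (M - 1). hh i m) = XX i (M - 1) - XX (i - 1) 0" by (rule row_sum)
    then have "(\<Sum>m<M. hh i m) = XX i (M - 1) - XX (i - 1) 0" using \<open>M = Suc (M - 1)\<close> by metis
    moreover have "XX i (M - 1) \<le> XX (k - 1) (M - 1)" using i assms by (intro mono_all) auto
    moreover have "XX 0 0 \<le> XX (i - 1) 0" using i assms by (intro mono_all) auto
    ultimately show "(\<Sum>m<M. hh i m) \<le> XX (k - 1) (M - 1) - XX 0 0" by simp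
  qed
  also have "\<dots> = real k * (XX (k - 1) (M - 1) - XX 0 0)" by simp
  finally show ?thesis using c by (simp add: mult_left_mono)
qed

end

theorem theorem2:
  fixes n k M :: nat and L tau :: real and S :: "rect set" and P0 :: "real \<times> real"
  assumes "scene n S"
    and "1 \<le> k" and "k \<le> n"
    and "real n \<le> L"
    and "tau = L / sqrt (real n * real k)"
    and "real M = 2 * L / tau + real k"
    and "is_post S tau P0"
    and "fence_tree_exists S n tau P0 k M"
  shows "root_path_len S n tau P0 (k - 1) (M - 1)
           \<le> 4 * L + 3 * tau * (fst (ftree S n tau P0 (k - 1) (M - 1)) - fst P0)
         \<and> total_edge_len S n tau P0 k M
           \<le> real k * (3 * L + 3 * tau * (fst (ftree S n tau P0 (k - 1) (M - 1)) - fst P0))"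
proof -
  have W: "\<forall>R\<in>S. rx1 R + 1 \<le> rx2 R" and fS: "finite S" using assms(1) unfolding scene_def by auto
  define s where "s = sqrt (real n * real k)"
  have k1: "1 \<le> real k" using assms(2) by simp
  have nk: "real k \<le> real n" using assms(3) by simp
  have s0: "0 < s" unfolding s_def using k1 nk by simp
  have L0: "1 \<le> L" using assms(4) k1 nk by simp
  have sn: "s \<le> real n"
  proof -
    have "s \<le> sqrt (real n * real n)" unfolding s_def using nk k1 by (intro real_sqrt_le_mono mult_left_mono) auto
    thus ?thesis by simp
  qed
  have sk: "real k \<le> s"
  proof -
    have "sqrt (real k * real k) \<le> s" unfolding s_def using nk k1 by (intro real_sqrt_le_mono mult_right_mono) auto
    thus ?thesis by simp
  qed
  have teq: "tau = L / s" using assms(5) s_def by simp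
  have tpos: "0 < tau" using teq s0 L0 by simp
  have t1: "1 \<le> tau"
  proof -
    have "s \<le> L" using sn assms(4) by simp
    thus ?thesis using teq s0 by simp
  qed
  have kt: "real k * tau \<le> L"
  proof -
    have "real k * tau = real k * L / s" using teq by simp
    also have "\<dots> \<le> s * L / s" using sk L0 s0 by (intro divide_right_mono mult_right_mono) auto
    also have "\<dots> = L" using s0 by simp
    finally show ?thesis .
  qed
  have Mt: "real M * tau = 2 * L + real k * tau" using assms(6) tpos by (simp add: field_simps)
  have M1: "1 \<le> real M" using assms(6) tpos L0 k1 by (smt (verit) divide_nonneg_pos)
  hence M0: "0 < M" by simp
  have k0: "0 < k" using assms(2) by simp
  have t0: "0 \<le> tau" using tpos by simp
  define D where "D = fst (ftree S n tau P0 (k - 1) (M - 1)) - fst P0"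
  have D0: "0 \<le> D" using mono_all[OF W fS t0 assms(8), of 0 "k - 1" 0 "M - 1"] k0 M0 unfolding D_def by simp
  have cD: "(1 + 2 * tau) * D \<le> 3 * tau * D" using D0 t1 mult_left_mono[OF t1 D0] by (simp add: algebra_simps)
  have a: "root_path_len S n tau P0 (k - 1) (M - 1) \<le> real (k - 1 + (M - 1)) * tau + (1 + 2 * tau) * D"
    using root_bound[OF W fS t0 assms(8), of "k - 1" "M - 1"] k0 M0 unfolding D_def by simp
  have "real (k - 1 + (M - 1)) * tau \<le> real k * tau + real M * tau"
    using k0 M0 tpos by (simp add: of_nat_diff algebra_simps)
  hence A: "root_path_len S n tau P0 (k - 1) (M - 1) \<le> 4 * L + 3 * tau * D"
    using a cD Mt kt by linarith
  have b: "total_edge_len S n tau P0 k M \<le> real (k * M - 1) * tau + (1 + 2 * tau) * (real k * D)"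
    using total_bound[OF W fS t0 assms(8) k0 M0] unfolding D_def by simp
  have b1: "real (k * M - 1) * tau \<le> real k * (real M * tau)"
    using k0 M0 tpos by (simp add: of_nat_diff algebra_simps)
  have b2: "real k * (real M * tau) \<le> real k * (3 * L)" using Mt kt k1 by simp
  have b3: "(1 + 2 * tau) * (real k * D) \<le> real k * (3 * tau * D)"
    using mult_left_mono[OF cD, of "real k"] by (simp add: algebra_simps)
  have B: "total_edge_len S n tau P0 k M \<le> real k * (3 * L + 3 * tau * D)"
    using b b1 b2 b3 by (simp add: algebra_simps)
  show ?thesis using A B unfolding D_def by simp
qed

end
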